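(* Let $a,b,c\in\mathbb{R}$ and $f(x)=x^3+ax^2+bx+c$. Then $f(x)\ge0$ for all $x\ge0$ if and only if one of the following holds: (1) $a\ge0$, $b\ge0$ and $c\ge0$; (2) $c=0$ and $a^2-4b\le0$; (3) $c>0$ and $a^2b^2-4b^3-4a^3c+18abc-27c^2\le0$. *)

theory Defs
  imports Complex_Main
begin

end

theory Submission
  imports Defs
begin

lemma suff3:
  fixes a b c :: real
  assumes c: "c > 0" and D: "a^2*b^2 - 4*b^3 - 4*a^3*c + 18*a*b*c - 27*c^2 \<le> 0"
    and x0: "x0 \<ge> 0"
  shows "x0^3 + a*x0^2 + b*x0 + c \<ge> 0"
proof (rule ccontr)
  define F where "F = (\<lambda>x::real. x^3 + a*x^2 + b*x + c)"
  assume "\<not> ?thesis"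
  hence Fx0: "F x0 < 0" by (simp add: F_def)
  have cont: "continuous_on {0..x0} F" unfolding F_def by (intro continuous_intros)
  have "F 0 = c" by (simp add: F_def)
  obtain r where r: "0 \<le> r" "r \<le> x0" "F r = 0"
    using IVT2'[of F x0 0 0, OF _ _ x0 cont] Fx0 c \<open>F 0 = c\<close> by auto
  have rx0: "r < x0" using r Fx0 by (cases "r = x0") auto
  define p where "p = a + r"
  define q where "q = b + r*p"
  have ha: "a = p - r" by (simp add: p_def)
  have hb: "b = q - r*p" by (simp add: q_def)
  have hc: "c = - r*q" using r(3) unfolding F_def q_def p_def
    by (simp add: algebra_simps power2_eq_square power3_eq_cube)
  have fact: "F x = (x - r) * (x^2 + p*x + q)" for x
    unfolding F_def ha hb hc by (simp add: algebra_simps power2_eq_square power3_eq_cube)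
  have g0: "x0^2 + p*x0 + q < 0"
  proof (rule ccontr)
    assume "\<not> ?thesis"
    hence "(x0 - r) * (x0^2 + p*x0 + q) \<ge> 0" using rx0 by simp
    thus False using Fx0 fact by simp
  qed
  have "4*(x0^2 + p*x0 + q) = (2*x0+p)^2 - (p^2 - 4*q)" by (simp add: algebra_simps power2_eq_square)
  moreover have "(2*x0+p)^2 \<ge> 0" by simp
  ultimately have disc: "p^2 - 4*q > 0" using g0 by (smt (verit))
  have "a^2*b^2 - 4*b^3 - 4*a^3*c + 18*a*b*c - 27*c^2 = (p^2 - 4*q) * (r^2 + p*r + q)^2"
    unfolding ha hb hc by (simp add: algebra_simps power2_eq_square power3_eq_cube)
  with D have "(p^2 - 4*q) * (r^2 + p*r + q)^2 \<le> 0" by simp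
  hence "(r^2 + p*r + q)^2 \<le> 0" using disc by (simp add: mult_le_0_iff)
  hence gr: "r^2 + p*r + q = 0" by simp
  hence hq: "q = - r*(r+p)" by (simp add: algebra_simps power2_eq_square)
  have "c = r^2*(r+p)" unfolding hc hq by (simp add: algebra_simps power2_eq_square)
  hence rp: "r + p > 0" using c by (metis not_less zero_le_power2 mult_nonneg_nonpos)
  have "F x0 = (x0 - r)^2 * (x0 + r + p)" unfolding fact hq by (simp add: algebra_simps power2_eq_square)
  moreover have "(x0 - r)^2 * (x0 + r + p) \<ge> 0" using rp x0 by simp
  ultimately show False using Fx0 by simp
qed

lemma nec3:
  fixes a b c :: real
  assumes H: "\<forall>x::real. x \<ge> 0 \<longrightarrow> x^3 + a*x^2 + b*x + c \<ge> 0"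
    and c: "c > 0" and ab: "a < 0 \<or> b < 0"
  shows "a^2*b^2 - 4*b^3 - 4*a^3*c + 18*a*b*c - 27*c^2 \<le> 0"
proof (cases "a^2 - 3*b < 0")
  case True
  define P where "P = a^2 - 3*b"
  define Q where "Q = 2*a^3 - 9*a*b + 27*c"
  have "27*(a^2*b^2 - 4*b^3 - 4*a^3*c + 18*a*b*c - 27*c^2) = 4*P^3 - Q^2"
    unfolding P_def Q_def by (simp add: algebra_simps power2_eq_square power3_eq_cube)
  moreover have "P^3 < 0" using True P_def by simp
  moreover have "Q^2 \<ge> 0" by simp
  ultimately have "27*(a^2*b^2 - 4*b^3 - 4*a^3*c + 18*a*b*c - 27*c^2) < 0" by linarith
  thus ?thesis by simp
next
  case False
  define s where "s = sqrt (a^2 - 3*b)"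
  have s0: "s \<ge> 0" using False s_def by simp
  have s2: "s^2 = a^2 - 3*b" using False s_def by simp
  hence hb: "b = (a^2 - s^2)/3" by simp
  define xp where "xp = (-a + s)/3"
  define xm where "xm = (-a - s)/3"
  have as: "a < s"
  proof (cases "a < 0")
    case True thus ?thesis using s0 by simp
  next
    case False
    hence "b < 0" using ab by simp
    hence "a^2 < s^2" using s2 by simp
    thus ?thesis using s0 False by (meson power_less_imp_less_base)
  qed
  have xp0: "xp \<ge> 0" using as unfolding xp_def by simp
  have fp: "xp^3 + a*xp^2 + b*xp + c \<ge> 0" using H xp0 by blast
  have "xm^3 + a*xm^2 + b*xm + c = c - xm^2 * (a + 2*xm)"
    unfolding hb xm_def by (simp add: field_simps power2_eq_square power3_eq_cube)
  moreover have "a + 2*xm \<le> 0" unfolding xm_def using as s0 by (simp add: field_simps)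
  moreover have "xm^2 \<ge> 0" by simp
  ultimately have fm: "xm^3 + a*xm^2 + b*xm + c \<ge> 0" using c
    by (metis diff_ge_0_iff_ge less_eq_real_def mult_nonneg_nonpos order_trans)
  have "a^2*b^2 - 4*b^3 - 4*a^3*c + 18*a*b*c - 27*c^2
      = -27 * ((xp^3 + a*xp^2 + b*xp + c) * (xm^3 + a*xm^2 + b*xm + c))"
    unfolding hb xp_def xm_def by (simp add: field_simps power2_eq_square power3_eq_cube)
  moreover have "(xp^3 + a*xp^2 + b*xp + c) * (xm^3 + a*xm^2 + b*xm + c) \<ge> 0"
    using fp fm by (rule mult_nonneg_nonneg)
  ultimately show ?thesis by linarith
qed

lemma nec0:
  fixes a b :: real
  assumes H: "\<forall>x::real. x \<ge> 0 \<longrightarrow> x^3 + a*x^2 + b*x \<ge> 0"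
    and ab: "a < 0 \<or> b < 0"
  shows "a^2 - 4*b \<le> 0"
proof (rule ccontr)
  assume A: "\<not> ?thesis"
  show False
  proof (cases "a < 0")
    case True
    define x where "x = -a/2"
    have "x \<ge> 0" using True x_def by simp
    hence h: "x^3 + a*x^2 + b*x \<ge> 0" using H by blast
    have "x^3 + a*x^2 + b*x = x * (b - a^2/4)" unfolding x_def
      by (simp add: algebra_simps power2_eq_square power3_eq_cube)
    moreover have "x > 0" using True x_def by simp
    moreover have "b - a^2/4 < 0" using A by simp
    ultimately have "x^3 + a*x^2 + b*x < 0" by (simp add: mult_pos_neg)
    thus False using h by simp
  next
    case False
    hence b: "b < 0" and a: "a \<ge> 0" using ab by auto
    define x where "x = min 1 (-b/(2*(1+a)))"
    have "b/(2*(1+a)) < 0" using a b by (intro divide_neg_pos) auto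
    hence "-b/(2*(1+a)) > 0" by simp
    hence xpos: "x > 0" using x_def by simp
    have x1: "x \<le> 1" using x_def by simp
    have xb: "x*(1+a) \<le> -b/2"
    proof -
      have "x \<le> -b/(2*(1+a))" using x_def by simp
      hence "x*(1+a) \<le> -b/(2*(1+a)) * (1+a)" by (rule mult_right_mono) (use a in simp)
      also have "\<dots> = -b/2" using a by (simp add: field_simps)
      finally show ?thesis .
    qed
    have "x^2 \<le> x" using xpos x1 by (simp add: power2_eq_square mult_le_cancel_left1)
    hence g: "x^2 + a*x + b < 0" using xb b by (simp add: algebra_simps)
    have "x^3 + a*x^2 + b*x = x * (x^2 + a*x + b)"
      by (simp add: algebra_simps power2_eq_square power3_eq_cube)
    moreover have "x * (x^2 + a*x + b) < 0" using xpos g by (simp add: mult_pos_neg)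
    ultimately show False using H xpos by (metis less_eq_real_def not_le)
  qed
qed

theorem lemma4p9:
  fixes a b c :: real
  shows "(\<forall>x::real. x \<ge> 0 \<longrightarrow> x^3 + a*x^2 + b*x + c \<ge> 0) \<longleftrightarrow>
    ((a \<ge> 0 \<and> b \<ge> 0 \<and> c \<ge> 0) \<or>
     (c = 0 \<and> a^2 - 4*b \<le> 0) \<or>
     (c > 0 \<and> a^2*b^2 - 4*b^3 - 4*a^3*c + 18*a*b*c - 27*c^2 \<le> 0))"
proof
  assume H: "\<forall>x::real. x \<ge> 0 \<longrightarrow> x^3 + a*x^2 + b*x + c \<ge> 0"
  have c: "c \<ge> 0" using H[rule_format, of 0] by simp
  show "(a \<ge> 0 \<and> b \<ge> 0 \<and> c \<ge> 0) \<or>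
     (c = 0 \<and> a^2 - 4*b \<le> 0) \<or>
     (c > 0 \<and> a^2*b^2 - 4*b^3 - 4*a^3*c + 18*a*b*c - 27*c^2 \<le> 0)"
  proof (cases "a \<ge> 0 \<and> b \<ge> 0")
    case True thus ?thesis using c by simp
  next
    case False
    hence ab: "a < 0 \<or> b < 0" by auto
    show ?thesis
    proof (cases "c = 0")
      case True
      have "a^2 - 4*b \<le> 0" using nec0[OF _ ab] H True by simp
      thus ?thesis using True by simp
    next
      case False
      hence "c > 0" using c by simp
      thus ?thesis using nec3[OF H _ ab] by simp
    qed
  qed
next
  assume "(a \<ge> 0 \<and> b \<ge> 0 \<and> c \<ge> 0) \<or>
     (c = 0 \<and> a^2 - 4*b \<le> 0) \<or>
     (c > 0 \<and> a^2*b^2 - 4*b^3 - 4*a^3*c + 18*a*b*c - 27*c^2 \<le> 0)"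
  thus "\<forall>x::real. x \<ge> 0 \<longrightarrow> x^3 + a*x^2 + b*x + c \<ge> 0"
  proof (elim disjE conjE; intro allI impI)
    fix x :: real assume "a \<ge> 0" "b \<ge> 0" "c \<ge> 0" "x \<ge> 0"
    thus "x^3 + a*x^2 + b*x + c \<ge> 0" by simp
  next
    fix x :: real assume c0: "c = 0" and d: "a^2 - 4*b \<le> 0" and x: "x \<ge> 0"
    have "4*(x^2 + a*x + b) = (2*x+a)^2 + (4*b - a^2)" by (simp add: algebra_simps power2_eq_square)
    moreover have "(2*x+a)^2 \<ge> 0" by simp
    ultimately have "4*(x^2 + a*x + b) \<ge> 0" using d by linarith
    hence "x^2 + a*x + b \<ge> 0" by simp
    hence "x * (x^2 + a*x + b) \<ge> 0" using x by simp
    moreover have "x^3 + a*x^2 + b*x + c = x * (x^2 + a*x + b)" using c0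
      by (simp add: algebra_simps power2_eq_square power3_eq_cube)
    ultimately show "x^3 + a*x^2 + b*x + c \<ge> 0" by simp
  next
    fix x :: real assume "c > 0" "a^2*b^2 - 4*b^3 - 4*a^3*c + 18*a*b*c - 27*c^2 \<le> 0" "x \<ge> 0"
    thus "x^3 + a*x^2 + b*x + c \<ge> 0" using suff3 by blast
  qed
qed

end
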